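(* Let $\rho^A$ be a quantum state on a finite-dimensional system $A$ of dimension $d_A$, and let $\varepsilon\in[0,1]$. Then \[ \kappa_{3\sqrt{\varepsilon}}(\rho^A)\ \ge\ \log d_A-\widetilde{H}_{\max}^{\varepsilon}(A)_{\rho^A}. \]
   Context: All logarithms are base 2; whenever a quantity expresses a number of bits/qubits, a dimension, or a support size, the appropriate floor or ceiling is implicitly taken. Smoothed support max-entropy: given $\rho^A$ and $\varepsilon\ge 0$, let $\rho'^A\le\rho^A$ be the operator obtained from the spectral decomposition of $\rho^A$ by zeroing out the smallest eigenvalues whose sum is at most $\varepsilon$; then $\widetilde{H}_{\max}^{\varepsilon}(A)_{\rho}:=\log|\operatorname{supp}(\rho')|$ (log of the rank of $\rho'$). A purity concentration $\varepsilon$-code for $\rho^A$ consists of an ancilla system $C$ of dimension $d_C$ and a unitary $U^{AC\to A_pA_g}$ (with $A\otimes C\cong A_p\otimes A_g$) such that $\big\|\operatorname{Tr}_{A_g}[U(\rho^A\otimes|0\rangle\langle 0|^C)U^\dagger]-|0\rangle\langle0|^{A_p}\big\|_1\le\varepsilon$; its rate is $\log d_{A_p}-\log d_C$. A rate is $\varepsilon$-achievable if some purity concentration $\varepsilon$-code has that rate, and $\kappa_\varepsilon(\rho^A)$ (the $\varepsilon$-purity) is the supremum of $\varepsilon$-achievable rates. *)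

theory Defs
  imports "Jordan_Normal_Form.Schur_Decomposition" "Jordan_Normal_Form.DL_Rank"
begin

(* Complex d x d matrices represent operators on a d-dimensional Hilbert space.
   Composite systems X \<otimes> Y with dims dX, dY are indexed by x * dY + y. *)

definition mtrace :: "complex mat \<Rightarrow> complex" where
  "mtrace M = (\<Sum>i<dim_row M. M $$ (i, i))"

definition unitary_mat :: "nat \<Rightarrow> complex mat \<Rightarrow> bool" where
  "unitary_mat n U \<longleftrightarrow> U \<in> carrier_mat n n \<and> mat_adjoint U * U = 1\<^sub>m n \<and> U * mat_adjoint U = 1\<^sub>m n"

definition hermitian_mat :: "nat \<Rightarrow> complex mat \<Rightarrow> bool" where
  "hermitian_mat n M \<longleftrightarrow> M \<in> carrier_mat n n \<and> mat_adjoint M = M"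

definition psd_mat :: "nat \<Rightarrow> complex mat \<Rightarrow> bool" where
  "psd_mat n M \<longleftrightarrow> hermitian_mat n M \<and>
     (\<forall>v \<in> carrier_vec n. \<exists>r::real. r \<ge> 0 \<and> (M *\<^sub>v v) \<bullet>c v = complex_of_real r)"

definition density_mat :: "nat \<Rightarrow> complex mat \<Rightarrow> bool" where
  "density_mat d \<rho> \<longleftrightarrow> psd_mat d \<rho> \<and> mtrace \<rho> = 1"

definition diag_real :: "real list \<Rightarrow> complex mat" where
  "diag_real ls = mat (length ls) (length ls) (\<lambda>(i, j). if i = j then complex_of_real (ls ! i) else 0)"

definition spectral_decomp :: "nat \<Rightarrow> complex mat \<Rightarrow> complex mat \<Rightarrow> real list \<Rightarrow> bool" where
  "spectral_decomp d \<rho> U ls \<longleftrightarrow> unitary_mat d U \<and> length ls = d \<and> sorted ls \<and>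
     \<rho> = U * diag_real ls * mat_adjoint U"

definition num_zeroed :: "real \<Rightarrow> real list \<Rightarrow> nat" where
  "num_zeroed eps ls = (GREATEST m. m \<le> length ls \<and> sum_list (take m ls) \<le> eps)"

definition smoothed_op :: "nat \<Rightarrow> real \<Rightarrow> complex mat \<Rightarrow> complex mat" where
  "smoothed_op d eps \<rho> = (SOME \<rho>'. \<exists>U ls. spectral_decomp d \<rho> U ls \<and>
      \<rho>' = U * diag_real (map (\<lambda>i. if i < num_zeroed eps ls then 0 else ls ! i) [0..<d]) * mat_adjoint U)"

definition Hmax_supp :: "nat \<Rightarrow> real \<Rightarrow> complex mat \<Rightarrow> real" where
  "Hmax_supp d eps \<rho> = log 2 (real (vec_space.rank d (smoothed_op d eps \<rho>)))"

(* trace norm ||X||_1 = Tr sqrt(X^dagger X), sqrt the (unique) PSD square root *)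
definition trace_norm :: "nat \<Rightarrow> complex mat \<Rightarrow> real" where
  "trace_norm n X = Re (mtrace (THE R. psd_mat n R \<and> R * R = mat_adjoint X * X))"

definition tensor_mat :: "complex mat \<Rightarrow> complex mat \<Rightarrow> complex mat" where
  "tensor_mat M N = mat (dim_row M * dim_row N) (dim_col M * dim_col N)
     (\<lambda>(i, j). M $$ (i div dim_row N, j div dim_col N) * N $$ (i mod dim_row N, j mod dim_col N))"

definition ket0bra0 :: "nat \<Rightarrow> complex mat" where
  "ket0bra0 d = mat d d (\<lambda>(i, j). if i = 0 \<and> j = 0 then 1 else 0)"

definition ptrace2 :: "nat \<Rightarrow> nat \<Rightarrow> complex mat \<Rightarrow> complex mat" where
  "ptrace2 dX dY M = mat dX dX (\<lambda>(i, j). \<Sum>k<dY. M $$ (i * dY + k, j * dY + k))"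

(* purity concentration eps-code for rho (on A, dim dA) with ancilla dim dC, unitary U,
   and output A_p \<otimes> A_g with dims dP, dG, dP * dG = dA * dC *)
definition pc_code :: "nat \<Rightarrow> complex mat \<Rightarrow> real \<Rightarrow> nat \<Rightarrow> nat \<Rightarrow> nat \<Rightarrow> complex mat \<Rightarrow> bool" where
  "pc_code dA \<rho> eps dC dP dG U \<longleftrightarrow> 0 < dC \<and> 0 < dP \<and> 0 < dG \<and> dP * dG = dA * dC \<and>
     unitary_mat (dA * dC) U \<and>
     trace_norm dP (ptrace2 dP dG (U * tensor_mat \<rho> (ket0bra0 dC) * mat_adjoint U) - ket0bra0 dP) \<le> eps"

definition achievable :: "nat \<Rightarrow> complex mat \<Rightarrow> real \<Rightarrow> real \<Rightarrow> bool" where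
  "achievable dA \<rho> eps r \<longleftrightarrow> (\<exists>dC dP dG U. pc_code dA \<rho> eps dC dP dG U \<and> r = log 2 dP - log 2 dC)"

definition purity :: "nat \<Rightarrow> real \<Rightarrow> complex mat \<Rightarrow> real" where
  "purity dA eps \<rho> = Sup {r. achievable dA \<rho> eps r}"

end

theory Submission
  imports Defs
begin

lemma adj_dim[simp]: "dim_row (mat_adjoint A) = dim_col A" "dim_col (mat_adjoint A) = dim_row A"
  unfolding mat_adjoint_def by auto

lemma adj_index[simp]: "i < dim_col A \<Longrightarrow> j < dim_row A \<Longrightarrow> mat_adjoint A $$ (i,j) = cnj (A $$ (j,i))"
  unfolding mat_adjoint_def by (simp add: mat_of_rows_def)

lemma adj_carrier[simp]: "A \<in> carrier_mat n m \<Longrightarrow> mat_adjoint A \<in> carrier_mat m n"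
  unfolding carrier_mat_def by simp

lemma adj_adj[simp]: "mat_adjoint (mat_adjoint A) = (A :: complex mat)"
  by (rule eq_matI; simp)

lemma mult_index_sum: "A \<in> carrier_mat n k \<Longrightarrow> B \<in> carrier_mat k m \<Longrightarrow> i < n \<Longrightarrow> j < m \<Longrightarrow>
  (A * B) $$ (i,j) = (\<Sum>l<k. A $$ (i,l) * B $$ (l,j))"
  by (auto simp: scalar_prod_def lessThan_atLeast0 intro!: sum.cong)

lemma adj_mult: assumes "A \<in> carrier_mat n k" "B \<in> carrier_mat k m"
  shows "mat_adjoint (A * B) = mat_adjoint B * mat_adjoint (A :: complex mat)"
proof (rule eq_matI)
  fix i j assume ij: "i < dim_row (mat_adjoint B * mat_adjoint A)" "j < dim_col (mat_adjoint B * mat_adjoint A)"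
  hence i: "i < m" and j: "j < n" using assms by auto
  have "mat_adjoint (A * B) $$ (i,j) = cnj ((A*B) $$ (j,i))" using i j assms by auto
  also have "\<dots> = cnj (\<Sum>l<k. A $$ (j,l) * B $$ (l,i))"
    using mult_index_sum[OF assms j i] by simp
  also have "\<dots> = (\<Sum>l<k. cnj (A $$ (j,l)) * cnj (B $$ (l,i)))"
    by (simp add: cnj_sum)
  also have "\<dots> = (mat_adjoint B * mat_adjoint A) $$ (i,j)"
    using i j assms by (subst mult_index_sum[of _ m k _ n], auto intro!: sum.cong)
  finally show "mat_adjoint (A * B) $$ (i, j) = (mat_adjoint B * mat_adjoint A) $$ (i, j)" .
qed (use assms in auto)

lemma diag_real_carrier[simp]: "diag_real ls \<in> carrier_mat (length ls) (length ls)"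
  unfolding diag_real_def by auto

lemma diag_real_index[simp]: "i < length ls \<Longrightarrow> j < length ls \<Longrightarrow>
   diag_real ls $$ (i,j) = (if i = j then complex_of_real (ls ! i) else 0)"
  unfolding diag_real_def by auto

lemma diag_real_dim[simp]: "dim_row (diag_real ls) = length ls" "dim_col (diag_real ls) = length ls"
  unfolding diag_real_def by auto

lemma UDU_index: assumes U: "U \<in> carrier_mat n n" and l: "length ls = n" and i: "i < n" and j: "j < n"
  shows "(U * diag_real ls * mat_adjoint U) $$ (i,j) = (\<Sum>k<n. U$$(i,k) * of_real (ls!k) * cnj (U$$(j,k)))"
proof -
  have D: "diag_real ls \<in> carrier_mat n n" using l by auto
  have "(U * diag_real ls * mat_adjoint U) $$ (i,j) = (\<Sum>k<n. (U * diag_real ls) $$ (i,k) * mat_adjoint U $$ (k,j))"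
    using U D i j by (subst mult_index_sum[of _ n n _ n], auto)
  also have "\<dots> = (\<Sum>k<n. U$$(i,k) * of_real (ls!k) * cnj (U$$(j,k)))"
  proof (rule sum.cong[OF refl])
    fix k assume k: "k \<in> {..<n}"
    have "(U * diag_real ls) $$ (i,k) = (\<Sum>l<n. U $$ (i,l) * diag_real ls $$ (l,k))"
      using U D i k by (subst mult_index_sum[of _ n n _ n], auto)
    also have "\<dots> = (\<Sum>l<n. if l = k then U $$ (i,k) * of_real (ls!k) else 0)"
      using k l by (intro sum.cong, auto)
    also have "\<dots> = U $$ (i,k) * of_real (ls!k)" using k by simp
    finally show "(U * diag_real ls) $$ (i,k) * mat_adjoint U $$ (k,j) = U$$(i,k) * of_real (ls!k) * cnj (U$$(j,k))"
      using U k j by auto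
  qed
  finally show ?thesis .
qed

lemma adjU_U_index: "U \<in> carrier_mat n n \<Longrightarrow> i < n \<Longrightarrow> j < n \<Longrightarrow>
  (mat_adjoint U * U) $$ (i,j) = (\<Sum>k<n. cnj (U $$ (k,i)) * U $$ (k,j))"
  by (subst mult_index_sum[of _ n n _ n], auto)

lemma U_adjU_index: "U \<in> carrier_mat n n \<Longrightarrow> i < n \<Longrightarrow> j < n \<Longrightarrow>
  (U * mat_adjoint U) $$ (i,j) = (\<Sum>k<n. U $$ (i,k) * cnj (U $$ (j,k)))"
  by (subst mult_index_sum[of _ n n _ n], auto)

lemma unitary_cols: assumes "unitary_mat n U" "i < n" "j < n"
  shows "(\<Sum>k<n. cnj (U $$ (k,i)) * U $$ (k,j)) = (if i = j then 1 else 0)"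
proof -
  have U: "U \<in> carrier_mat n n" and e: "mat_adjoint U * U = 1\<^sub>m n" using assms unfolding unitary_mat_def by auto
  have "(mat_adjoint U * U) $$ (i,j) = (if i = j then 1 else 0)" using e assms by simp
  thus ?thesis using adjU_U_index[OF U assms(2,3)] by simp
qed

lemma unitary_rows: assumes "unitary_mat n U" "i < n" "j < n"
  shows "(\<Sum>k<n. U $$ (i,k) * cnj (U $$ (j,k))) = (if i = j then 1 else 0)"
proof -
  have U: "U \<in> carrier_mat n n" and e: "U * mat_adjoint U = 1\<^sub>m n" using assms unfolding unitary_mat_def by auto
  have "(U * mat_adjoint U) $$ (i,j) = (if i = j then 1 else 0)" using e assms by simp
  thus ?thesis using U_adjU_index[OF U assms(2,3)] by simp
qed

lemma unitaryI: assumes U: "U \<in> carrier_mat n n"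
  and c: "\<And>i j. i < n \<Longrightarrow> j < n \<Longrightarrow> (\<Sum>k<n. cnj (U $$ (k,i)) * U $$ (k,j)) = (if i = j then 1 else 0)"
  shows "unitary_mat n U"
proof -
  have e: "mat_adjoint U * U = 1\<^sub>m n"
  proof (rule eq_matI)
    fix i j assume "i < dim_row (1\<^sub>m n)" "j < dim_col (1\<^sub>m n)"
    hence ij: "i < n" "j < n" by auto
    show "(mat_adjoint U * U) $$ (i, j) = 1\<^sub>m n $$ (i, j)"
      by (subst adjU_U_index[OF U ij], insert ij c, simp)
  qed (insert U, auto)
  have "U * mat_adjoint U = 1\<^sub>m n"
    by (rule mat_mult_left_right_inverse[OF _ U e], insert U, simp)
  thus ?thesis using e U unfolding unitary_mat_def by simp
qed

lemma cscalar_sum: "v \<in> carrier_vec n \<Longrightarrow> w \<in> carrier_vec n \<Longrightarrow>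
   v \<bullet>c w = (\<Sum>k<n. v $ k * cnj (w $ k))"
  unfolding scalar_prod_def by (auto simp: lessThan_atLeast0 intro!: sum.cong)

lemma cscalar_self: "v \<in> carrier_vec n \<Longrightarrow> v \<bullet>c v = complex_of_real (\<Sum>k<n. (cmod (v $ k))\<^sup>2)"
proof -
  assume v: "v \<in> carrier_vec n"
  have "v \<bullet>c v = (\<Sum>k<n. v$k * cnj (v$k))" using cscalar_sum[OF v v] .
  also have "\<dots> = (\<Sum>k<n. complex_of_real ((cmod (v$k))\<^sup>2))"
    by (rule sum.cong[OF refl], rule complex_norm_square[symmetric])
  also have "\<dots> = complex_of_real (\<Sum>k<n. (cmod (v $ k))\<^sup>2)" by (simp only: of_real_sum)
  finally show ?thesis .
qed

lemma cscalar_self_zero: "(v :: complex vec) \<in> carrier_vec n \<Longrightarrow> v \<bullet>c v = 0 \<Longrightarrow> v = 0\<^sub>v n"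
proof -
  assume v: "v \<in> carrier_vec n" and z: "v \<bullet>c v = 0"
  hence "(\<Sum>k<n. (cmod (v $ k))\<^sup>2) = 0" using cscalar_self[OF v] by simp
  hence "\<forall>k\<in>{..<n}. (cmod (v $ k))\<^sup>2 = 0" by (subst sum_nonneg_eq_0_iff[symmetric], auto)
  thus ?thesis using v by (intro eq_vecI, auto)
qed

lemma unitary_extend: fixes u :: "complex vec" assumes u: "u \<in> carrier_vec n" and un: "u \<bullet>c u = 1"
  shows "\<exists>W. unitary_mat n W \<and> col W 0 = u"
proof -
  interpret cof_vec_space n "TYPE(complex)" .
  have u0: "u \<noteq> 0\<^sub>v n" using un u by auto
  have n: "n > 0"
  proof (rule ccontr)
    assume "\<not> n > 0" hence "n = 0" by simp
    thus False using cscalar_sum[OF u u] un by simp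
  qed
  define b where "b = basis_completion u"
  from basis_completion[OF u u0, folded b_def]
  have b: "set b \<subseteq> carrier_vec n" "distinct b" "\<not> lin_dep (set b)" "length b = n" "hd b = u" by auto
  obtain bs where bv: "b = u # bs" using b(4,5) n by (cases b, auto)
  define ws where "ws = gram_schmidt n b"
  from gram_schmidt_result[OF b(1) b(2) b(3) ws_def]
  have ws: "corthogonal ws" "set ws \<subseteq> carrier_vec n" "length ws = n" using b(4) by auto
  have "hd ws = u" unfolding ws_def bv by (rule gram_schmidt_hd[OF u])
  hence ws0: "ws ! 0 = u" using ws(3) n by (cases ws, auto)
  have wsi: "ws ! i \<in> carrier_vec n" if "i < n" for i using ws that by auto
  define r where "r i = (\<Sum>k<n. (cmod (ws ! i $ k))\<^sup>2)" for i
  have r: "ws ! i \<bullet>c ws ! i = complex_of_real (r i)" if "i < n" for i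
    unfolding r_def using cscalar_self[OF wsi[OF that]] .
  have rpos: "r i > 0" if "i < n" for i
  proof -
    have "ws ! i \<bullet>c ws ! i \<noteq> 0" using corthogonalD[OF ws(1), of i i] that ws(3) by auto
    hence "r i \<noteq> 0" using r[OF that] by auto
    moreover have "r i \<ge> 0" unfolding r_def by (intro sum_nonneg, auto)
    ultimately show ?thesis by simp
  qed
  define c where "c i = 1 / sqrt (r i)" for i
  define W where "W = mat n n (\<lambda>(k,i). complex_of_real (c i) * (ws ! i $ k))"
  have W: "W \<in> carrier_mat n n" unfolding W_def by auto
  have "unitary_mat n W"
  proof (rule unitaryI[OF W])
    fix i j assume i: "i < n" and j: "j < n"
    have "(\<Sum>k<n. cnj (W $$ (k,i)) * W $$ (k,j))
        = complex_of_real (c i * c j) * (\<Sum>k<n. ws ! j $ k * cnj (ws ! i $ k))"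
      unfolding sum_distrib_left using i j by (intro sum.cong refl, auto simp: W_def)
    also have "(\<Sum>k<n. ws ! j $ k * cnj (ws ! i $ k)) = ws ! j \<bullet>c ws ! i"
      using cscalar_sum[OF wsi[OF j] wsi[OF i]] by simp
    also have "complex_of_real (c i * c j) * \<dots> = (if i = j then 1 else 0)"
    proof (cases "i = j")
      case True
      have "c i * c i * r i = 1" unfolding c_def using rpos[OF i]
        by (simp add: field_simps)
      hence "complex_of_real (c i * c i * r i) = 1" by simp
      thus ?thesis using True r[OF i] by simp
    next
      case False
      hence "ws ! j \<bullet>c ws ! i = 0" using corthogonalD[OF ws(1), of j i] i j ws(3) by auto
      thus ?thesis using False by simp
    qed
    finally show "(\<Sum>k<n. cnj (W $$ (k,i)) * W $$ (k,j)) = (if i = j then 1 else 0)" .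
  qed
  moreover have "col W 0 = u"
  proof -
    have "r 0 = 1" using r[OF n] un ws0 by simp
    hence "c 0 = 1" unfolding c_def by simp
    thus ?thesis using n u ws0 by (intro eq_vecI, auto simp: W_def)
  qed
  ultimately show ?thesis by blast
qed

lemma unitary_carrier: "unitary_mat n U \<Longrightarrow> U \<in> carrier_mat n n"
  unfolding unitary_mat_def by auto

lemma unitary_mult: assumes U: "unitary_mat n U" and V: "unitary_mat n V"
  shows "unitary_mat n (U * V)"
proof -
  have Uc: "U \<in> carrier_mat n n" and Vc: "V \<in> carrier_mat n n" using U V unitary_carrier by auto
  have u1: "mat_adjoint U * U = 1\<^sub>m n" "U * mat_adjoint U = 1\<^sub>m n" using U unfolding unitary_mat_def by auto
  have v1: "mat_adjoint V * V = 1\<^sub>m n" "V * mat_adjoint V = 1\<^sub>m n" using V unfolding unitary_mat_def by auto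
  have Ua: "mat_adjoint U \<in> carrier_mat n n" and Va: "mat_adjoint V \<in> carrier_mat n n" using Uc Vc by auto
  have a1: "mat_adjoint U * (U * V) = V"
    by (subst assoc_mult_mat[OF Ua Uc Vc, symmetric], subst u1(1), rule left_mult_one_mat[OF Vc])
  have e1: "mat_adjoint (U * V) * (U * V) = 1\<^sub>m n"
    by (subst adj_mult[OF Uc Vc], subst assoc_mult_mat[OF Va Ua mult_carrier_mat[OF Uc Vc]], subst a1, rule v1(1))
  have a2: "V * (mat_adjoint V * mat_adjoint U) = mat_adjoint U"
    by (subst assoc_mult_mat[OF Vc Va Ua, symmetric], subst v1(2), rule left_mult_one_mat[OF Ua])
  have e2: "(U * V) * mat_adjoint (U * V) = 1\<^sub>m n"
    by (subst adj_mult[OF Uc Vc], subst assoc_mult_mat[OF Uc Vc mult_carrier_mat[OF Va Ua]], subst a2, rule u1(2))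
  show ?thesis using e1 e2 Uc Vc unfolding unitary_mat_def by auto
qed

lemma mult5: assumes "X \<in> carrier_mat n n" "Y \<in> carrier_mat n n" "Z \<in> carrier_mat n n"
  "P \<in> carrier_mat n n" "Q \<in> carrier_mat n n"
  shows "X * (Y * Z * P) * Q = (X * Y) * Z * (P * Q)"
proof -
  have "X * (Y * Z * P) = X * (Y * Z) * P"
    by (rule assoc_mult_mat[OF assms(1) mult_carrier_mat[OF assms(2,3)] assms(4), symmetric])
  also have "X * (Y * Z) = X * Y * Z" by (rule assoc_mult_mat[OF assms(1-3), symmetric])
  finally have "X * (Y * Z * P) * Q = X * Y * Z * P * Q" by simp
  also have "\<dots> = X * Y * Z * (P * Q)"
    by (rule assoc_mult_mat[OF mult_carrier_mat[OF mult_carrier_mat[OF assms(1,2)] assms(3)] assms(4,5)])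
  finally show ?thesis .
qed

lemma spectral_ex: "hermitian_mat n A \<Longrightarrow>
  \<exists>U ls. unitary_mat n U \<and> length ls = n \<and> A = U * diag_real ls * mat_adjoint U"
proof (induction n arbitrary: A)
  case 0
  hence A: "A \<in> carrier_mat 0 0" unfolding hermitian_mat_def by auto
  have u: "unitary_mat 0 (1\<^sub>m 0)" unfolding unitary_mat_def by (auto intro!: eq_matI)
  have "A = 1\<^sub>m 0 * diag_real [] * mat_adjoint (1\<^sub>m 0)" using A by (auto intro!: eq_matI)
  with u show ?case by (intro exI[of _ "1\<^sub>m 0"] exI[of _ "[]"], auto)
next
  case (Suc n A)
  let ?N = "Suc n"
  have A: "A \<in> carrier_mat ?N ?N" and Ah: "mat_adjoint A = A" using Suc.prems unfolding hermitian_mat_def by auto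
  obtain as where cp: "char_poly A = (\<Prod>a\<leftarrow>as. [:- a, 1:])" and las: "length as = ?N"
    using char_poly_factorized[OF A] by blast
  obtain e as' where as: "as = e # as'" using las by (cases as, auto)
  have "poly (char_poly A) e = 0" unfolding cp as by simp
  hence ev: "eigenvalue A e" using eigenvalue_root_char_poly[OF A] by simp
  define v where "v = find_eigenvector A e"
  have "eigenvector A v e" unfolding v_def by (rule find_eigenvector[OF A ev])
  hence v: "v \<in> carrier_vec ?N" and v0: "v \<noteq> 0\<^sub>v ?N" and Av: "A *\<^sub>v v = e \<cdot>\<^sub>v v"
    unfolding eigenvector_def using A by auto
  define r where "r = (\<Sum>k<?N. (cmod (v $ k))\<^sup>2)"
  have vr: "v \<bullet>c v = complex_of_real r" unfolding r_def by (rule cscalar_self[OF v])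
  have "r \<noteq> 0" using vr cscalar_self_zero[OF v] v0 by auto
  moreover have "r \<ge> 0" unfolding r_def by (intro sum_nonneg, auto)
  ultimately have rpos: "r > 0" by simp
  define u where "u = complex_of_real (1 / sqrt r) \<cdot>\<^sub>v v"
  have u: "u \<in> carrier_vec ?N" unfolding u_def using v by simp
  have "u \<bullet>c u = complex_of_real (1 / sqrt r) * cnj (complex_of_real (1 / sqrt r)) * (v \<bullet>c v)"
    unfolding u_def using v by (simp add: conjugate_smult_vec)
  also have "\<dots> = complex_of_real (1 / sqrt r) * complex_of_real (1 / sqrt r) * complex_of_real r"
    using vr by simp
  also have "\<dots> = complex_of_real (1 / sqrt r * (1 / sqrt r) * r)" by (simp only: of_real_mult)
  also have "1 / sqrt r * (1 / sqrt r) * r = 1" using rpos by (simp add: field_simps)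
  finally have uu: "u \<bullet>c u = 1" by simp
  have Au: "A *\<^sub>v u = e \<cdot>\<^sub>v u" unfolding u_def using mult_mat_vec[OF A v] Av v
    by (simp add: smult_smult_assoc mult.commute)
  obtain W where W: "unitary_mat ?N W" and Wu: "col W 0 = u" using unitary_extend[OF u uu] by blast
  have Wc: "W \<in> carrier_mat ?N ?N" using W unitary_carrier by auto
  define A' where "A' = mat_adjoint W * A * W"
  have A'c: "A' \<in> carrier_mat ?N ?N" unfolding A'_def using Wc A by auto
  have Wac: "mat_adjoint W \<in> carrier_mat ?N ?N" using Wc by simp
  have A'h: "mat_adjoint A' = A'"
  proof -
    have "mat_adjoint A' = mat_adjoint W * mat_adjoint (mat_adjoint W * A)"
      unfolding A'_def by (rule adj_mult[OF mult_carrier_mat[OF Wac A] Wc])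
    also have "mat_adjoint (mat_adjoint W * A) = mat_adjoint A * W"
      using adj_mult[OF Wac A] by simp
    also have "mat_adjoint W * (mat_adjoint A * W) = A'" unfolding A'_def Ah
      by (rule assoc_mult_mat[OF Wac A Wc, symmetric])
    finally show ?thesis .
  qed
  have col0: "A' $$ (i,0) = (if i = 0 then e else 0)" if i: "i < ?N" for i
  proof -
    have "A' = mat_adjoint W * (A * W)" unfolding A'_def by (rule assoc_mult_mat[OF Wac A Wc])
    hence "A' $$ (i,0) = (mat_adjoint W * (A * W)) $$ (i,0)" by simp
    also have "\<dots> = (\<Sum>k<?N. mat_adjoint W $$ (i,k) * (A * W) $$ (k,0))"
      by (rule mult_index_sum[OF Wac mult_carrier_mat[OF A Wc] i], simp)
    also have "\<dots> = (\<Sum>k<?N. cnj (W $$ (k,i)) * (e * W $$ (k,0)))"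
    proof (rule sum.cong[OF refl])
      fix k assume k: "k \<in> {..<?N}"
      have "(A * W) $$ (k,0) = (A *\<^sub>v col W 0) $ k" using A Wc k by auto
      also have "\<dots> = e * W $$ (k,0)" unfolding Wu Au using u k Wu[symmetric] Wc by auto
      finally show "mat_adjoint W $$ (i,k) * (A * W) $$ (k,0) = cnj (W $$ (k,i)) * (e * W $$ (k,0))"
        using Wc i k by simp
    qed
    also have "\<dots> = e * (\<Sum>k<?N. cnj (W $$ (k,i)) * W $$ (k,0))"
      unfolding sum_distrib_left by (intro sum.cong refl, simp add: ac_simps)
    also have "\<dots> = (if i = 0 then e else 0)" using unitary_cols[OF W i, of 0] by simp
    finally show ?thesis .
  qed
  have A'conj: "A' $$ (i,j) = cnj (A' $$ (j,i))" if "i < ?N" "j < ?N" for i j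
  proof -
    have "A' $$ (i,j) = mat_adjoint A' $$ (i,j)" using A'h by simp
    thus ?thesis using that A'c by simp
  qed
  have row0: "A' $$ (0,j) = (if j = 0 then cnj e else 0)" if "j < ?N" for j
    using A'conj[OF _ that, of 0] col0[OF that] by simp
  have ereal: "e = complex_of_real (Re e)"
  proof -
    have ee: "e = cnj e" using col0[of 0] row0[of 0] by simp
    have "Im e = - Im e" using arg_cong[OF ee, of Im] by simp
    hence "Im e = 0" by simp
    thus ?thesis by (simp add: complex_eq_iff)
  qed
  define A3 where "A3 = mat n n (\<lambda>(i,j). A' $$ (Suc i, Suc j))"
  have "hermitian_mat n A3" unfolding hermitian_mat_def
    by (auto simp: A3_def intro!: eq_matI, subst A'conj, auto)
  from Suc.IH[OF this] obtain U3 ls3 where U3: "unitary_mat n U3" and l3: "length ls3 = n"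
    and A3d: "A3 = U3 * diag_real ls3 * mat_adjoint U3" by blast
  have U3c: "U3 \<in> carrier_mat n n" using U3 unitary_carrier by auto
  define B where "B = mat ?N ?N (\<lambda>(i,j). if i = 0 \<and> j = 0 then 1 else if i = 0 \<or> j = 0 then 0 else U3 $$ (i - 1, j - 1))"
  have Bc: "B \<in> carrier_mat ?N ?N" unfolding B_def by auto
  have B: "unitary_mat ?N B"
  proof (rule unitaryI[OF Bc])
    fix i j assume i: "i < ?N" and j: "j < ?N"
    show "(\<Sum>k<?N. cnj (B $$ (k,i)) * B $$ (k,j)) = (if i = j then 1 else 0)"
      unfolding sum.lessThan_Suc_shift using i j
      by (cases i; cases j; simp add: B_def unitary_cols[OF U3])
  qed
  define ls where "ls = Re e # ls3"
  have lls: "length ls = ?N" unfolding ls_def using l3 by simp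
  have A'd: "A' = B * diag_real ls * mat_adjoint B"
  proof (rule eq_matI)
    fix i j assume "i < dim_row (B * diag_real ls * mat_adjoint B)" "j < dim_col (B * diag_real ls * mat_adjoint B)"
    hence i: "i < ?N" and j: "j < ?N" using Bc by auto
    show "A' $$ (i,j) = (B * diag_real ls * mat_adjoint B) $$ (i,j)"
      unfolding UDU_index[OF Bc lls i j] sum.lessThan_Suc_shift
    proof (cases i; cases j)
      fix i' j' assume ii: "i = Suc i'" and jj: "j = Suc j'"
      have "A' $$ (i,j) = A3 $$ (i', j')" using ii jj i j by (simp add: A3_def)
      also have "\<dots> = (\<Sum>k<n. U3 $$ (i',k) * complex_of_real (ls3 ! k) * cnj (U3 $$ (j',k)))"
        unfolding A3d using UDU_index[OF U3c l3] ii jj i j by simp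
      finally show "A' $$ (i, j) = B $$ (i, 0) * complex_of_real (ls ! 0) * cnj (B $$ (j, 0)) +
         (\<Sum>k<n. B $$ (i, Suc k) * complex_of_real (ls ! Suc k) * cnj (B $$ (j, Suc k)))"
        using ii jj i j by (simp add: B_def ls_def)
    qed (insert i j col0 row0 ereal, auto simp: B_def ls_def)
  qed (insert A'c Bc, auto)
  define U where "U = W * B"
  have U: "unitary_mat ?N U" unfolding U_def by (rule unitary_mult[OF W B])
  have WWa: "W * mat_adjoint W = 1\<^sub>m ?N" using W unfolding unitary_mat_def by auto
  have Bac: "mat_adjoint B \<in> carrier_mat ?N ?N" using Bc by simp
  have Dc: "diag_real ls \<in> carrier_mat ?N ?N" using lls by auto
  have "W * A' * mat_adjoint W = (W * mat_adjoint W) * A * (W * mat_adjoint W)"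
    unfolding A'_def by (rule mult5[OF Wc Wac A Wc Wac])
  also have "\<dots> = A" unfolding WWa using A by simp
  finally have AA: "A = W * A' * mat_adjoint W" by simp
  also have "\<dots> = (W * B) * diag_real ls * (mat_adjoint B * mat_adjoint W)"
    unfolding A'd by (rule mult5[OF Wc Bc Dc Bac Wac])
  also have "\<dots> = U * diag_real ls * mat_adjoint U" unfolding U_def adj_mult[OF Wc Bc] ..
  finally show ?case using U lls by blast
qed

lemma spectral_sorted: assumes "hermitian_mat n A" shows "\<exists>U ls. spectral_decomp n A U ls"
proof -
  obtain U ls where U: "unitary_mat n U" and l: "length ls = n" and A: "A = U * diag_real ls * mat_adjoint U"
    using spectral_ex[OF assms] by blast
  have Uc: "U \<in> carrier_mat n n" using U unitary_carrier by auto
  have "mset (sort ls) = mset ls" by simp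
  then obtain p where p: "p permutes {..<length ls}" and pl: "permute_list p ls = sort ls"
    by (rule mset_eq_permutation)
  have p': "p permutes {..<n}" using p l by simp
  have pn: "p k < n" if "k < n" for k using permutes_in_image[OF p'] that by simp
  have pinj: "p i = p j \<longleftrightarrow> i = j" for i j using permutes_inj[OF p'] by (auto dest: injD)
  define ls' where "ls' = sort ls"
  have l': "length ls' = n" unfolding ls'_def using l by simp
  have ls'k: "ls' ! k = ls ! (p k)" if "k < n" for k
    unfolding ls'_def pl[symmetric] using permute_list_nth[OF p] that l by simp
  define U' where "U' = mat n n (\<lambda>(i,j). U $$ (i, p j))"
  have U'c: "U' \<in> carrier_mat n n" unfolding U'_def by simp
  have U': "unitary_mat n U'"
  proof (rule unitaryI[OF U'c])
    fix i j assume i: "i < n" and j: "j < n"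
    have "(\<Sum>k<n. cnj (U' $$ (k,i)) * U' $$ (k,j)) = (\<Sum>k<n. cnj (U $$ (k,p i)) * U $$ (k,p j))"
      using i j by (intro sum.cong refl, auto simp: U'_def)
    also have "\<dots> = (if i = j then 1 else 0)" using unitary_cols[OF U pn[OF i] pn[OF j]] pinj by simp
    finally show "(\<Sum>k<n. cnj (U' $$ (k,i)) * U' $$ (k,j)) = (if i = j then 1 else 0)" .
  qed
  have "A = U' * diag_real ls' * mat_adjoint U'"
  proof (rule eq_matI)
    fix i j assume "i < dim_row (U' * diag_real ls' * mat_adjoint U')" "j < dim_col (U' * diag_real ls' * mat_adjoint U')"
    hence i: "i < n" and j: "j < n" using U'c by auto
    have "A $$ (i,j) = (\<Sum>k<n. U$$(i,k) * of_real (ls!k) * cnj (U$$(j,k)))"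
      unfolding A by (rule UDU_index[OF Uc l i j])
    also have "\<dots> = (\<Sum>k<n. U$$(i,p k) * of_real (ls!(p k)) * cnj (U$$(j,p k)))"
      by (subst sum.permute[OF p'], simp add: comp_def)
    also have "\<dots> = (\<Sum>k<n. U'$$(i,k) * of_real (ls'!k) * cnj (U'$$(j,k)))"
      using i j by (intro sum.cong refl, auto simp: U'_def ls'k)
    also have "\<dots> = (U' * diag_real ls' * mat_adjoint U') $$ (i,j)"
      by (rule UDU_index[OF U'c l' i j, symmetric])
    finally show "A $$ (i,j) = (U' * diag_real ls' * mat_adjoint U') $$ (i,j)" .
  qed (insert A Uc U'c l l', auto)
  moreover have "sorted ls'" unfolding ls'_def by simp
  ultimately show ?thesis unfolding spectral_decomp_def using U' l' by blast
qed

lemma adj_triple_index: assumes V: "V \<in> carrier_mat n n" and X: "X \<in> carrier_mat n n" and i: "i < n" and j: "j < n"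
  shows "(mat_adjoint V * X * V) $$ (i,j) = (\<Sum>b<n. (\<Sum>a<n. cnj (V$$(a,i)) * X$$(a,b)) * V$$(b,j))"
proof -
  have Va: "mat_adjoint V \<in> carrier_mat n n" using V by simp
  have "(mat_adjoint V * X * V) $$ (i,j) = (\<Sum>b<n. (mat_adjoint V * X) $$ (i,b) * V$$(b,j))"
    by (rule mult_index_sum[OF mult_carrier_mat[OF Va X] V i j])
  also have "\<dots> = (\<Sum>b<n. (\<Sum>a<n. cnj (V$$(a,i)) * X$$(a,b)) * V$$(b,j))"
  proof (rule sum.cong[OF refl])
    fix b assume b: "b \<in> {..<n}"
    have "(mat_adjoint V * X) $$ (i,b) = (\<Sum>a<n. mat_adjoint V $$ (i,a) * X$$(a,b))"
      using b by (intro mult_index_sum[OF Va X i], simp)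
    also have "\<dots> = (\<Sum>a<n. cnj (V$$(a,i)) * X$$(a,b))" using V i by (intro sum.cong refl, simp)
    finally show "(mat_adjoint V * X) $$ (i,b) * V$$(b,j) = (\<Sum>a<n. cnj (V$$(a,i)) * X$$(a,b)) * V$$(b,j)" by simp
  qed
  finally show ?thesis .
qed

lemma spectral_diag: assumes sd: "spectral_decomp n \<rho> V ls"
  shows "mat_adjoint V * \<rho> * V = diag_real ls"
proof -
  have V: "unitary_mat n V" and l: "length ls = n" and r: "\<rho> = V * diag_real ls * mat_adjoint V"
    using sd unfolding spectral_decomp_def by auto
  have Vc: "V \<in> carrier_mat n n" using V unitary_carrier by auto
  have Va: "mat_adjoint V \<in> carrier_mat n n" using Vc by simp
  have D: "diag_real ls \<in> carrier_mat n n" using l by auto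
  have VV: "mat_adjoint V * V = 1\<^sub>m n" using V unfolding unitary_mat_def by auto
  have "mat_adjoint V * \<rho> * V = (mat_adjoint V * V) * diag_real ls * (mat_adjoint V * V)"
    unfolding r by (rule mult5[OF Va Vc D Va Vc])
  also have "\<dots> = diag_real ls" unfolding VV by (simp add: left_mult_one_mat[OF D] right_mult_one_mat[OF D])
  finally show ?thesis .
qed

lemma spectral_entry: assumes sd: "spectral_decomp n \<rho> V ls" and i: "i < n" and j: "j < n"
  shows "(\<Sum>b<n. (\<Sum>a<n. cnj (V$$(a,i)) * \<rho>$$(a,b)) * V$$(b,j)) = (if i = j then complex_of_real (ls ! i) else 0)"
proof -
  have V: "unitary_mat n V" and l: "length ls = n" and r: "\<rho> = V * diag_real ls * mat_adjoint V"
    using sd unfolding spectral_decomp_def by auto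
  have Vc: "V \<in> carrier_mat n n" using V unitary_carrier by auto
  have rc: "\<rho> \<in> carrier_mat n n" unfolding r using Vc l by auto
  have "(\<Sum>b<n. (\<Sum>a<n. cnj (V$$(a,i)) * \<rho>$$(a,b)) * V$$(b,j)) = (mat_adjoint V * \<rho> * V) $$ (i,j)"
    by (rule adj_triple_index[OF Vc rc i j, symmetric])
  also have "\<dots> = diag_real ls $$ (i,j)" unfolding spectral_diag[OF sd] ..
  also have "\<dots> = (if i = j then complex_of_real (ls ! i) else 0)" using i j l by simp
  finally show ?thesis .
qed

lemma spectral_nonneg: assumes dm: "density_mat n \<rho>" and sd: "spectral_decomp n \<rho> V ls" and i: "i < n"
  shows "ls ! i \<ge> 0"
proof -
  have V: "unitary_mat n V" and l: "length ls = n" and r: "\<rho> = V * diag_real ls * mat_adjoint V"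
    using sd unfolding spectral_decomp_def by auto
  have Vc: "V \<in> carrier_mat n n" using V unitary_carrier by auto
  have rc: "\<rho> \<in> carrier_mat n n" unfolding r using Vc l by auto
  define w where "w = col V i"
  have w: "w \<in> carrier_vec n" unfolding w_def using Vc by auto
  obtain x :: real where x: "x \<ge> 0" "(\<rho> *\<^sub>v w) \<bullet>c w = complex_of_real x"
    using dm w unfolding density_mat_def psd_mat_def by blast
  have "(\<rho> *\<^sub>v w) \<bullet>c w = (\<Sum>a<n. (\<rho> *\<^sub>v w) $ a * cnj (w $ a))"
    by (rule cscalar_sum, insert rc w, auto)
  also have "\<dots> = (\<Sum>a<n. (\<Sum>b<n. \<rho> $$ (a,b) * V $$ (b,i)) * cnj (V $$ (a,i)))"
  proof (rule sum.cong[OF refl])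
    fix a assume a: "a \<in> {..<n}"
    have "(\<rho> *\<^sub>v w) $ a = row \<rho> a \<bullet> w" using rc a by auto
    also have "\<dots> = (\<Sum>b<n. \<rho> $$ (a,b) * V $$ (b,i))"
      unfolding scalar_prod_def using rc w a i Vc by (auto simp: w_def lessThan_atLeast0 intro!: sum.cong)
    finally show "(\<rho> *\<^sub>v w) $ a * cnj (w $ a) = (\<Sum>b<n. \<rho> $$ (a,b) * V $$ (b,i)) * cnj (V $$ (a,i))"
      using a i Vc by (simp add: w_def)
  qed
  also have "\<dots> = (\<Sum>b<n. (\<Sum>a<n. cnj (V$$(a,i)) * \<rho>$$(a,b)) * V$$(b,i))"
    unfolding sum_distrib_right by (subst sum.swap, intro sum.cong refl, simp add: ac_simps)
  also have "\<dots> = complex_of_real (ls ! i)" using spectral_entry[OF sd i i] by simp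
  finally show ?thesis using x by simp
qed

lemma spectral_trace: assumes dm: "density_mat n \<rho>" and sd: "spectral_decomp n \<rho> V ls"
  shows "(\<Sum>i<n. ls ! i) = 1"
proof -
  have V: "unitary_mat n V" and l: "length ls = n" and r: "\<rho> = V * diag_real ls * mat_adjoint V"
    using sd unfolding spectral_decomp_def by auto
  have Vc: "V \<in> carrier_mat n n" using V unitary_carrier by auto
  have rc: "\<rho> \<in> carrier_mat n n" unfolding r using Vc l by auto
  have "1 = mtrace \<rho>" using dm unfolding density_mat_def by simp
  also have "\<dots> = (\<Sum>a<n. \<rho> $$ (a,a))" unfolding mtrace_def using rc by simp
  also have "\<dots> = (\<Sum>a<n. \<Sum>k<n. V$$(a,k) * of_real (ls!k) * cnj (V$$(a,k)))"
    unfolding r by (intro sum.cong refl, rule UDU_index[OF Vc l], auto)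
  also have "\<dots> = (\<Sum>k<n. of_real (ls!k) * (\<Sum>a<n. cnj (V$$(a,k)) * V$$(a,k)))"
    unfolding sum_distrib_left by (subst sum.swap, intro sum.cong refl, simp add: ac_simps)
  also have "\<dots> = (\<Sum>k<n. complex_of_real (ls!k))" using unitary_cols[OF V] by (intro sum.cong refl, simp)
  finally have "complex_of_real (\<Sum>k<n. ls!k) = 1" by simp
  thus ?thesis by (metis of_real_eq_1_iff)
qed

lemma nz_props: assumes "0 \<le> eps"
  shows "num_zeroed eps ls \<le> length ls" "sum_list (take (num_zeroed eps ls) ls) \<le> eps"
    "\<And>k. k \<le> length ls \<Longrightarrow> sum_list (take k ls) \<le> eps \<Longrightarrow> k \<le> num_zeroed eps ls"
proof -
  let ?P = "\<lambda>m. m \<le> length ls \<and> sum_list (take m ls) \<le> eps"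
  have P0: "?P 0" using assms by simp
  have bnd: "\<forall>y. ?P y \<longrightarrow> y \<le> length ls" by simp
  have "?P (Greatest ?P)" by (rule GreatestI_nat[of ?P 0 "length ls", OF P0], insert bnd, auto)
  thus "num_zeroed eps ls \<le> length ls" "sum_list (take (num_zeroed eps ls) ls) \<le> eps"
    unfolding num_zeroed_def by auto
  fix k assume "k \<le> length ls" "sum_list (take k ls) \<le> eps"
  thus "k \<le> num_zeroed eps ls" unfolding num_zeroed_def
    by (intro Greatest_le_nat[of ?P k "length ls"], auto)
qed

lemma sum_list_take_sum: "k \<le> length ls \<Longrightarrow> sum_list (take k ls) = (\<Sum>i<k. ls ! i)"
  by (simp add: sum_list_sum_nth lessThan_atLeast0 min_def)

lemma pos_after: assumes eps: "0 \<le> eps" and s: "sorted ls" and nn: "\<And>i. i < length ls \<Longrightarrow> ls ! i \<ge> 0"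
  and i: "num_zeroed eps ls \<le> i" "i < length ls"
  shows "ls ! i > 0"
proof (rule ccontr)
  assume "\<not> ls ! i > 0"
  hence z: "ls ! j = 0" if "j \<le> i" for j
    using sorted_nth_mono[OF s that i(2)] nn[of j] that i(2) by force
  have "sum_list (take (Suc i) ls) = (\<Sum>j<Suc i. ls ! j)" using i by (intro sum_list_take_sum, simp)
  also have "\<dots> = 0" using z by simp
  finally have "Suc i \<le> num_zeroed eps ls" using i eps by (intro nz_props(3), auto)
  thus False using i by simp
qed

lemma rank_lower: assumes sd: "spectral_decomp d \<rho> V ls" and m: "m \<le> d"
  and pos: "\<And>i. m \<le> i \<Longrightarrow> i < d \<Longrightarrow> ls ! i \<noteq> 0"
  shows "d - m \<le> vec_space.rank d (V * diag_real (map (\<lambda>i. if i < m then 0 else ls ! i) [0..<d]) * mat_adjoint V)"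
proof -
  interpret vec_space "TYPE(complex)" d .
  have V: "unitary_mat d V" and l: "length ls = d" using sd unfolding spectral_decomp_def by auto
  have Vc: "V \<in> carrier_mat d d" using V unitary_carrier by auto
  define f where "f = map (\<lambda>i. if i < m then 0 else ls ! i) [0..<d]"
  define g where "g = map (\<lambda>i. if i < m then 1 else ls ! i) [0..<d]"
  have lf: "length f = d" and lg: "length g = d" unfolding f_def g_def by auto
  define R where "R = V * diag_real f * mat_adjoint V"
  have Rc: "R \<in> carrier_mat d d" unfolding R_def using Vc lf by auto
  define E where "E k = mat d d (\<lambda>(a,b). \<Sum>j<k. V $$ (a,j) * cnj (V $$ (b,j)))" for k
  have Ec: "E k \<in> carrier_mat d d" for k unfolding E_def by auto
  have rE: "rank (E k) \<le> k" for k
  proof (induction k)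
    case 0
    have "E 0 = 0\<^sub>m d d" unfolding E_def by (intro eq_matI, auto)
    thus ?case using rank_0I by simp
  next
    case (Suc k)
    define F where "F = mat d d (\<lambda>(a,b). V $$ (a,k) * cnj (V $$ (b,k)))"
    have Fc: "F \<in> carrier_mat d d" unfolding F_def by auto
    have "E (Suc k) = E k + F" unfolding E_def F_def by (intro eq_matI, auto)
    hence "rank (E (Suc k)) \<le> rank (E k) + rank F" using rank_subadditive[OF Ec Fc] by simp
    moreover have "rank F \<le> 1"
      by (rule rank_le_1_product_entries[OF Fc, of "\<lambda>a. V $$ (a,k)" "\<lambda>b. cnj (V $$ (b,k))"], auto simp: F_def)
    ultimately show ?case using Suc.IH by simp
  qed
  define S where "S = V * diag_real g * mat_adjoint V"
  have Sc: "S \<in> carrier_mat d d" unfolding S_def using Vc lg by auto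
  have RS: "R + E m = S"
  proof (rule eq_matI)
    fix a b assume "a < dim_row S" "b < dim_col S"
    hence a: "a < d" and b: "b < d" using Sc by auto
    have "(R + E m) $$ (a,b) = R $$ (a,b) + E m $$ (a,b)" using Rc Ec[of m] a b by simp
    also have "R $$ (a,b) = (\<Sum>j<d. V$$(a,j) * of_real (f!j) * cnj (V$$(b,j)))"
      unfolding R_def by (rule UDU_index[OF Vc lf a b])
    also have "E m $$ (a,b) = (\<Sum>j<m. V $$ (a,j) * cnj (V $$ (b,j)))" unfolding E_def using a b by simp
    also have "\<dots> = (\<Sum>j<d. if j < m then V $$ (a,j) * cnj (V $$ (b,j)) else 0)"
    proof -
      have st: "{..<d} \<inter> {j. j < m} = {..<m}" using m by auto
      show ?thesis using sum.inter_restrict[of "{..<d}" "\<lambda>j. V $$ (a,j) * cnj (V $$ (b,j))" "{j. j < m}"] st by simp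
    qed
    also have "(\<Sum>j<d. V$$(a,j) * of_real (f!j) * cnj (V$$(b,j))) + \<dots> = (\<Sum>j<d. V$$(a,j) * of_real (g!j) * cnj (V$$(b,j)))"
      unfolding sum.distrib[symmetric] by (intro sum.cong refl, auto simp: f_def g_def)
    also have "\<dots> = S $$ (a,b)" unfolding S_def by (rule UDU_index[OF Vc lg a b, symmetric])
    finally show "(R + E m) $$ (a,b) = S $$ (a,b)" .
  qed (insert Rc Ec Sc, auto)
  have "det S \<noteq> 0"
  proof -
    have Va: "mat_adjoint V \<in> carrier_mat d d" using Vc by simp
    have D: "diag_real g \<in> carrier_mat d d" using lg by auto
    have "det S = det V * det (diag_real g) * det (mat_adjoint V)"
      unfolding S_def by (simp add: det_mult[OF mult_carrier_mat[OF Vc D] Va] det_mult[OF Vc D])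
    also have "\<dots> = det (diag_real g) * det (V * mat_adjoint V)" by (simp add: det_mult[OF Vc Va])
    also have "V * mat_adjoint V = 1\<^sub>m d" using V unfolding unitary_mat_def by simp
    also have "det (diag_real g) = (\<Prod>i = 0..<d. diag_real g $$ (i,i))"
      by (subst det_upper_triangular[OF _ D], auto simp: upper_triangular_def lg prod_list_diag_prod)
    finally have dS: "det S = (\<Prod>i = 0..<d. diag_real g $$ (i,i)) * det (1\<^sub>m d)" .
    have "(\<Prod>i = 0..<d. diag_real g $$ (i,i)) \<noteq> 0" using pos lg by (auto simp: g_def)
    thus ?thesis unfolding dS by simp
  qed
  hence "rank S = d" using det_rank_iff[OF Sc] by simp
  hence "d \<le> rank R + rank (E m)" using rank_subadditive[OF Rc Ec, of m] RS by simp
  hence "d \<le> rank R + m" using rE[of m] by simp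
  thus ?thesis unfolding R_def f_def by simp
qed

definition dmat :: "nat \<Rightarrow> (nat \<Rightarrow> complex) \<Rightarrow> complex mat" where
  "dmat n f = mat n n (\<lambda>(i,j). if i = j then f i else 0)"

lemma dmat_carrier[simp]: "dmat n f \<in> carrier_mat n n" unfolding dmat_def by simp
lemma dmat_dim[simp]: "dim_row (dmat n f) = n" "dim_col (dmat n f) = n" unfolding dmat_def by simp_all
lemma dmat_index[simp]: "i < n \<Longrightarrow> j < n \<Longrightarrow> dmat n f $$ (i,j) = (if i = j then f i else 0)"
  unfolding dmat_def by simp

lemma sum_delta_mult_right: "b < (n::nat) \<Longrightarrow> (\<Sum>k<n. g k * (if k = b then h k else 0)) = g b * (h b :: complex)"
proof -
  assume b: "b < n"
  have "(\<Sum>k<n. g k * (if k = b then h k else 0)) = (\<Sum>k<n. if k = b then g k * h k else 0)"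
    by (intro sum.cong refl, simp)
  also have "\<dots> = g b * h b" using b by (subst sum.delta, auto)
  finally show ?thesis .
qed

lemma sum_delta_mult_left: "a < (n::nat) \<Longrightarrow> (\<Sum>k<n. (if a = k then h k else 0) * g k) = h a * (g a :: complex)"
proof -
  assume a: "a < n"
  have "(\<Sum>k<n. (if a = k then h k else 0) * g k) = (\<Sum>k<n. if a = k then h k * g k else 0)"
    by (intro sum.cong refl, simp)
  also have "\<dots> = h a * g a" using a by (subst sum.delta', auto)
  finally show ?thesis .
qed

lemma dmat_mult_right: assumes R: "R \<in> carrier_mat n n" and a: "a < n" and b: "b < n"
  shows "(R * dmat n f) $$ (a,b) = R $$ (a,b) * f b"
  using mult_index_sum[OF R dmat_carrier a b] sum_delta_mult_right[OF b] a b by simp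

lemma dmat_mult_left: assumes R: "R \<in> carrier_mat n n" and a: "a < n" and b: "b < n"
  shows "(dmat n f * R) $$ (a,b) = f a * R $$ (a,b)"
  using mult_index_sum[OF dmat_carrier R a b] sum_delta_mult_left[OF a] a b by simp

lemma psd_sqrt_diag_unique:
  fixes s :: "nat \<Rightarrow> real"
  assumes s: "\<And>i. s i \<ge> 0" and R: "psd_mat n R" and RR: "R * R = dmat n (\<lambda>i. complex_of_real ((s i)\<^sup>2))"
  shows "R = dmat n (\<lambda>i. complex_of_real (s i))"
proof -
  have Rc: "R \<in> carrier_mat n n" and Rh: "mat_adjoint R = R" using R unfolding psd_mat_def hermitian_mat_def by auto
  have herm: "R $$ (j,i) = cnj (R $$ (i,j))" if "i < n" "j < n" for i j
  proof -
    have "R $$ (j,i) = mat_adjoint R $$ (j,i)" using Rh by simp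
    thus ?thesis using that Rc by simp
  qed
  let ?D = "dmat n (\<lambda>i. complex_of_real ((s i)\<^sup>2))"
  have RRi: "(\<Sum>k<n. R $$ (a,k) * R $$ (k,b)) = (if a = b then complex_of_real ((s a)\<^sup>2) else 0)"
    if "a < n" "b < n" for a b
  proof -
    have "(\<Sum>k<n. R $$ (a,k) * R $$ (k,b)) = (R*R) $$ (a,b)" using mult_index_sum[OF Rc Rc that] by simp
    also have "\<dots> = ?D $$ (a,b)" unfolding RR ..
    also have "\<dots> = (if a = b then complex_of_real ((s a)\<^sup>2) else 0)" using that by (simp only: dmat_index)
    finally show ?thesis .
  qed
  have comm: "R $$ (a,b) * complex_of_real ((s b)\<^sup>2) = complex_of_real ((s a)\<^sup>2) * R $$ (a,b)"
    if a: "a < n" and b: "b < n" for a b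
  proof -
    have "R * (R * R) = (R * R) * R" by (rule assoc_mult_mat[OF Rc Rc Rc, symmetric])
    hence "(R * ?D) $$ (a,b) = (?D * R) $$ (a,b)" unfolding RR by simp
    thus ?thesis unfolding dmat_mult_right[OF Rc a b] dmat_mult_left[OF Rc a b] .
  qed
  have comm2: "R $$ (a,b) * complex_of_real (s b) = complex_of_real (s a) * R $$ (a,b)"
    if a: "a < n" and b: "b < n" for a b
  proof (cases "R $$ (a,b) = 0")
    case False
    have "complex_of_real ((s b)\<^sup>2) = complex_of_real ((s a)\<^sup>2)" using comm[OF a b] False
      by (simp add: mult.commute)
    hence "(s b)\<^sup>2 = (s a)\<^sup>2" using of_real_eq_iff by blast
    hence "s b = s a" using s[of a] s[of b] by (simp add: power2_eq_iff_nonneg)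
    thus ?thesis by (simp add: mult.commute)
  qed simp
  have zero_row: "R $$ (a,b) = 0" if a: "a < n" and b: "b < n" and sa: "s a = 0" for a b
  proof -
    have "(\<Sum>k<n. R $$ (a,k) * R $$ (k,a)) = 0" using RRi[OF a a] sa by simp
    moreover have "(\<Sum>k<n. R $$ (a,k) * R $$ (k,a)) = complex_of_real (\<Sum>k<n. (cmod (R $$ (a,k)))\<^sup>2)"
    proof -
      have "(\<Sum>k<n. R $$ (a,k) * R $$ (k,a)) = (\<Sum>k<n. complex_of_real ((cmod (R $$ (a,k)))\<^sup>2))"
      proof (rule sum.cong[OF refl])
        fix k assume "k \<in> {..<n}"
        hence "R $$ (k,a) = cnj (R $$ (a,k))" using herm[OF a] by simp
        thus "R $$ (a,k) * R $$ (k,a) = complex_of_real ((cmod (R $$ (a,k)))\<^sup>2)"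
          by (simp only: complex_norm_square)
      qed
      thus ?thesis by (simp only: of_real_sum)
    qed
    ultimately have "complex_of_real (\<Sum>k<n. (cmod (R $$ (a,k)))\<^sup>2) = 0" by metis
    hence "(\<Sum>k<n. (cmod (R $$ (a,k)))\<^sup>2) = 0" by (simp only: of_real_eq_0_iff)
    hence "\<forall>k\<in>{..<n}. (cmod (R $$ (a,k)))\<^sup>2 = 0" by (subst sum_nonneg_eq_0_iff[symmetric], auto)
    thus ?thesis using b by simp
  qed
  show ?thesis
  proof (rule eq_matI)
    fix a b assume "a < dim_row (dmat n (\<lambda>i. complex_of_real (s i)))" "b < dim_col (dmat n (\<lambda>i. complex_of_real (s i)))"
    hence a: "a < n" and b: "b < n" by auto
    define w where "w = vec n (\<lambda>k. R $$ (k,b) - (if k = b then complex_of_real (s b) else 0))"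
    have w: "w \<in> carrier_vec n" unfolding w_def by simp
    obtain r :: real where r: "r \<ge> 0" "(R *\<^sub>v w) \<bullet>c w = complex_of_real r"
      using R w unfolding psd_mat_def by blast
    have Rw: "(R *\<^sub>v w) $ k = - complex_of_real (s k) * w $ k" if k: "k < n" for k
    proof -
      have "(R *\<^sub>v w) $ k = (\<Sum>j<n. R $$ (k,j) * w $ j)"
        using Rc w k by (auto simp: scalar_prod_def lessThan_atLeast0 intro!: sum.cong)
      also have "\<dots> = (\<Sum>j<n. R $$ (k,j) * R $$ (j,b)) - (\<Sum>j<n. R $$ (k,j) * (if j = b then complex_of_real (s b) else 0))"
        unfolding sum_subtractf[symmetric] w_def by (intro sum.cong refl, auto simp: right_diff_distrib)
      also have "\<dots> = (if k = b then complex_of_real ((s k)\<^sup>2) else 0) - R $$ (k,b) * complex_of_real (s b)"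
        using RRi[OF k b] sum_delta_mult_right[OF b] by simp
      also have "\<dots> = - complex_of_real (s k) * w $ k"
        using comm2[OF k b] k unfolding w_def by (auto simp: algebra_simps power2_eq_square)
      finally show ?thesis .
    qed
    have "(R *\<^sub>v w) \<bullet>c w = (\<Sum>k<n. (R *\<^sub>v w) $ k * cnj (w $ k))"
      by (rule cscalar_sum, insert Rc w, auto)
    also have "\<dots> = (\<Sum>k<n. - complex_of_real (s k * (cmod (w $ k))\<^sup>2))"
      using Rw by (intro sum.cong refl, simp add: complex_norm_square[symmetric] mult.assoc)
    also have "\<dots> = - complex_of_real (\<Sum>k<n. s k * (cmod (w $ k))\<^sup>2)"
      by (simp only: of_real_sum sum_negf)
    finally have "complex_of_real r = - complex_of_real (\<Sum>k<n. s k * (cmod (w $ k))\<^sup>2)" using r by simp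
    hence "r = - (\<Sum>k<n. s k * (cmod (w $ k))\<^sup>2)" by (metis of_real_eq_iff of_real_minus)
    moreover have "(\<Sum>k<n. s k * (cmod (w $ k))\<^sup>2) \<ge> 0" using s by (intro sum_nonneg, auto)
    ultimately have "(\<Sum>k<n. s k * (cmod (w $ k))\<^sup>2) = 0" using r by simp
    hence "\<forall>k\<in>{..<n}. s k * (cmod (w $ k))\<^sup>2 = 0" using s by (subst sum_nonneg_eq_0_iff[symmetric], auto)
    hence wa: "s a * (cmod (w $ a))\<^sup>2 = 0" using a by simp
    show "R $$ (a,b) = dmat n (\<lambda>i. complex_of_real (s i)) $$ (a,b)"
    proof (cases "s a = 0")
      case True
      thus ?thesis using zero_row[OF a b True] a b by auto
    next
      case False
      hence "w $ a = 0" using wa by simp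
      thus ?thesis using a b unfolding w_def by (auto split: if_splits)
    qed
  qed (insert Rc, auto)
qed

lemma psd_sqrt_diag_exists:
  fixes s :: "nat \<Rightarrow> real"
  assumes s: "\<And>i. s i \<ge> 0"
  shows "psd_mat n (dmat n (\<lambda>i. complex_of_real (s i)))"
    "dmat n (\<lambda>i. complex_of_real (s i)) * dmat n (\<lambda>i. complex_of_real (s i)) = dmat n (\<lambda>i. complex_of_real ((s i)\<^sup>2))"
proof -
  let ?S = "dmat n (\<lambda>i. complex_of_real (s i))"
  have h: "hermitian_mat n ?S" unfolding hermitian_mat_def by (auto intro!: eq_matI)
  have "\<exists>r::real. r \<ge> 0 \<and> (?S *\<^sub>v v) \<bullet>c v = complex_of_real r" if v: "v \<in> carrier_vec n" for v
  proof -
    have "(?S *\<^sub>v v) \<bullet>c v = (\<Sum>k<n. (?S *\<^sub>v v) $ k * cnj (v $ k))"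
      by (rule cscalar_sum, rule mult_mat_vec_carrier[OF dmat_carrier v], rule v)
    also have "\<dots> = (\<Sum>k<n. complex_of_real (s k * (cmod (v $ k))\<^sup>2))"
    proof (rule sum.cong[OF refl])
      fix k assume k: "k \<in> {..<n}"
      have "(?S *\<^sub>v v) $ k = (\<Sum>j<n. ?S $$ (k,j) * v $ j)"
        using v k by (auto simp: scalar_prod_def lessThan_atLeast0 intro!: sum.cong)
      also have "\<dots> = complex_of_real (s k) * v $ k" using k sum_delta_mult_left[of k n] by simp
      finally show "(?S *\<^sub>v v) $ k * cnj (v $ k) = complex_of_real (s k * (cmod (v $ k))\<^sup>2)"
        by (simp add: complex_norm_square[symmetric] mult.assoc)
    qed
    also have "\<dots> = complex_of_real (\<Sum>k<n. s k * (cmod (v $ k))\<^sup>2)" by (simp only: of_real_sum)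
    finally show ?thesis using s by (intro exI[of _ "\<Sum>k<n. s k * (cmod (v $ k))\<^sup>2"], auto intro!: sum_nonneg)
  qed
  thus "psd_mat n ?S" using h unfolding psd_mat_def by auto
  show "?S * ?S = dmat n (\<lambda>i. complex_of_real ((s i)\<^sup>2))"
  proof (rule eq_matI)
    fix i j assume "i < dim_row (dmat n (\<lambda>i. complex_of_real ((s i)\<^sup>2)))" "j < dim_col (dmat n (\<lambda>i. complex_of_real ((s i)\<^sup>2)))"
    hence i: "i < n" and j: "j < n" by auto
    show "(?S * ?S) $$ (i,j) = dmat n (\<lambda>i. complex_of_real ((s i)\<^sup>2)) $$ (i,j)"
      by (subst dmat_mult_right[OF dmat_carrier i j], insert i j, simp add: power2_eq_square)
  qed auto
qed

lemma trace_norm_dmat: "trace_norm n (dmat n f) = (\<Sum>i<n. cmod (f i))"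
proof -
  define s where "s i = cmod (f i)" for i
  have s: "s i \<ge> 0" for i unfolding s_def by simp
  have XX: "mat_adjoint (dmat n f) * dmat n f = dmat n (\<lambda>i. complex_of_real ((s i)\<^sup>2))"
  proof (rule eq_matI)
    fix a b assume "a < dim_row (dmat n (\<lambda>i. complex_of_real ((s i)\<^sup>2)))" "b < dim_col (dmat n (\<lambda>i. complex_of_real ((s i)\<^sup>2)))"
    hence a: "a < n" and b: "b < n" by auto
    have "mat_adjoint (dmat n f) = dmat n (\<lambda>i. cnj (f i))" by (rule eq_matI, auto)
    hence "(mat_adjoint (dmat n f) * dmat n f) $$ (a,b) = cnj (f a) * (dmat n f) $$ (a,b)"
      using dmat_mult_left[OF dmat_carrier a b] by simp
    thus "(mat_adjoint (dmat n f) * dmat n f) $$ (a,b) = dmat n (\<lambda>i. complex_of_real ((s i)\<^sup>2)) $$ (a,b)"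
      using a b by (simp add: s_def complex_norm_square[symmetric] mult.commute)
  qed auto
  let ?S = "dmat n (\<lambda>i. complex_of_real (s i))"
  have "(THE R. psd_mat n R \<and> R * R = mat_adjoint (dmat n f) * dmat n f) = ?S"
    unfolding XX
    by (rule the_equality, insert psd_sqrt_diag_exists[OF s] psd_sqrt_diag_unique[OF s], auto)
  hence "trace_norm n (dmat n f) = Re (mtrace ?S)" unfolding trace_norm_def by simp
  also have "\<dots> = (\<Sum>i<n. s i)" unfolding mtrace_def by simp
  finally show ?thesis unfolding s_def .
qed

lemma sum_add_split: "(\<Sum>x<(k::nat)+c. f x) = (\<Sum>x<k. f x) + (\<Sum>b<c. f (k+b))"
  by (induction c) (auto simp: add.commute add.left_commute)

lemma sum_split: "(\<Sum>x<d*c. f x) = (\<Sum>a<d. \<Sum>b<c. f (a*c+b))" for f :: "nat \<Rightarrow> 'a::comm_monoid_add"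
proof (induction d)
  case (Suc d)
  have "(\<Sum>x<Suc d * c. f x) = (\<Sum>x<d*c + c. f x)" by (simp add: add.commute)
  also have "\<dots> = (\<Sum>x<d*c. f x) + (\<Sum>b<c. f (d*c+b))" by (rule sum_add_split)
  finally show ?case using Suc by simp
qed simp

lemma sum_two_delta: "p < (c::nat) \<Longrightarrow>
  (\<Sum>b<c. (if b = p then X else 0) * (if b = q then Y else 0)) = (if p = q then X * (Y::complex) else 0)"
proof -
  assume p: "p < c"
  have "(\<Sum>b<c. (if b = p then X else 0) * (if b = q then Y else 0)) = (\<Sum>b<c. if b = p then (if p = q then X * Y else 0) else 0)"
    by (intro sum.cong refl, auto)
  also have "\<dots> = (if p = q then X * Y else 0)" using p by (subst sum.delta, auto)
  finally show ?thesis .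
qed

lemma unitaryI_rows: assumes U: "U \<in> carrier_mat n n"
  and c: "\<And>i j. i < n \<Longrightarrow> j < n \<Longrightarrow> (\<Sum>k<n. U $$ (i,k) * cnj (U $$ (j,k))) = (if i = j then 1 else 0)"
  shows "unitary_mat n U"
proof -
  have e: "U * mat_adjoint U = 1\<^sub>m n"
  proof (rule eq_matI)
    fix i j assume "i < dim_row (1\<^sub>m n)" "j < dim_col (1\<^sub>m n)"
    hence ij: "i < n" "j < n" by auto
    show "(U * mat_adjoint U) $$ (i, j) = 1\<^sub>m n $$ (i, j)"
      by (subst U_adjU_index[OF U ij], insert ij c, simp)
  qed (insert U, auto)
  have "mat_adjoint U * U = 1\<^sub>m n"
    by (rule mat_mult_left_right_inverse[OF U _ e], insert U, simp)
  thus ?thesis using e U unfolding unitary_mat_def by simp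
qed

lemma mod_div_split: assumes "b < (c::nat)" shows "(a*c+b) mod c = b" "(a*c+b) div c = a"
  using assms by auto

lemma idx_bound: assumes "a < d" "b < (c::nat)" shows "a*c+b < d*c"
proof -
  have "a*c + b < a*c + c" using assms(2) by simp
  also have "a*c + c = Suc a * c" by simp
  also have "Suc a * c \<le> d * c" using assms(1) by (intro mult_le_mono1, simp)
  finally show ?thesis .
qed

lemma mod_add_inj_aux: "(y + m) mod n = (y' + m) mod (n::nat) \<Longrightarrow> y < n \<Longrightarrow> y' < n \<Longrightarrow> y \<le> y' \<Longrightarrow> y = y'"
proof -
  assume e: "(y + m) mod n = (y' + m) mod n" and y: "y < n" "y' < n" "y \<le> y'"
  have "n dvd (y' + m) - (y + m)" using mod_eq_dvd_iff_nat[of "y+m" "y'+m" n] e y(3) by simp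
  hence "n dvd y' - y" by simp
  moreover have "y' - y < n" using y by simp
  ultimately have "y' - y = 0" using nat_dvd_not_less by (metis gr0I)
  thus ?thesis using y(3) by simp
qed
lemma mod_add_inj: "(y + m) mod n = (y' + m) mod (n::nat) \<Longrightarrow> y < n \<Longrightarrow> y' < n \<Longrightarrow> y = y'"
  by (metis mod_add_inj_aux nat_le_linear)

lemma code_exists:
  fixes d c m :: nat and \<epsilon> :: real
  assumes d: "0 < d" and c: "0 < c" and dm: "density_mat d \<rho>" and sd: "spectral_decomp d \<rho> V ls"
    and md: "m \<le> d" and dmc: "d - m \<le> c" and tk: "sum_list (take m ls) \<le> \<epsilon>"
    and e0: "0 \<le> \<epsilon>" and e1: "\<epsilon> \<le> 1"
  shows "\<exists>U. pc_code d \<rho> (3 * sqrt \<epsilon>) c d c U"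
proof -
  have V: "unitary_mat d V" and l: "length ls = d" and r: "\<rho> = V * diag_real ls * mat_adjoint V"
    using sd unfolding spectral_decomp_def by auto
  have Vc: "V \<in> carrier_mat d d" using V unitary_carrier by auto
  have rc: "\<rho> \<in> carrier_mat d d" unfolding r using Vc l by auto
  have nn: "ls ! i \<ge> 0" if "i < d" for i using spectral_nonneg[OF dm sd that] .
  have tr: "(\<Sum>i<d. ls ! i) = 1" using spectral_trace[OF dm sd] .
  define n where "n = d * c"
  have n: "0 < n" unfolding n_def using d c by simp
  have dn: "d \<le> n" unfolding n_def using c by simp
  define src where "src y = (y + m) mod n" for y
  have src_lt: "src y < n" for y unfolding src_def using n by simp
  have src_inj: "y = y'" if "y < n" "y' < n" "src y = src y'" for y y'
  proof -
    have "(y + m) mod n = (y' + m) mod n" using that(3) unfolding src_def .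
    thus ?thesis using that(1,2) by (rule mod_add_inj)
  qed
  define ci where "ci y = src y div d" for y
  define ii where "ii y = src y mod d" for y
  have ci_lt: "ci y < c" for y unfolding ci_def using src_lt[of y] unfolding n_def
    by (simp add: less_mult_imp_div_less mult.commute)
  have ii_lt: "ii y < d" for y unfolding ii_def using d by simp
  have src_eq: "src y = src y' \<longleftrightarrow> ci y = ci y' \<and> ii y = ii y'" for y y'
    unfolding ci_def ii_def by (metis div_mult_mod_eq)
  have ci0: "ci y = 0 \<longleftrightarrow> src y < d" for y
  proof
    assume "ci y = 0"
    hence "src y = src y mod d" unfolding ci_def by (metis add_0 div_mult_mod_eq mult_0)
    thus "src y < d" using d by (metis mod_less_divisor)
  qed (simp add: ci_def)
  have ii_src: "src y < d \<Longrightarrow> ii y = src y" for y unfolding ii_def by simp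
  define U where "U = mat n n (\<lambda>(y,x). if x mod c = ci y then cnj (V $$ (x div c, ii y)) else 0)"
  have Uc: "U \<in> carrier_mat n n" unfolding U_def by simp
  have Uidx: "U $$ (y, a*c+b) = (if b = ci y then cnj (V $$ (a, ii y)) else 0)"
    if "y < n" "a < d" "b < c" for y a b
  proof -
    have "a*c+b < n" unfolding n_def using idx_bound[OF that(2,3)] .
    thus ?thesis unfolding U_def using that mod_div_split[OF that(3), of a] by simp
  qed
  have U: "unitary_mat n U"
  proof (rule unitaryI_rows[OF Uc])
    fix y y' assume y: "y < n" and y': "y' < n"
    have "(\<Sum>k<n. U $$ (y,k) * cnj (U $$ (y',k))) = (\<Sum>a<d. \<Sum>b<c. U $$ (y,a*c+b) * cnj (U $$ (y',a*c+b)))"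
      unfolding n_def by (rule sum_split)
    also have "\<dots> = (\<Sum>a<d. \<Sum>b<c. (if b = ci y then cnj (V $$ (a, ii y)) else 0) * (if b = ci y' then V $$ (a, ii y') else 0))"
      using y y' by (intro sum.cong refl, auto simp: Uidx)
    also have "\<dots> = (\<Sum>a<d. if ci y = ci y' then cnj (V $$ (a, ii y)) * V $$ (a, ii y') else 0)"
      by (intro sum.cong refl sum_two_delta ci_lt)
    also have "\<dots> = (if ci y = ci y' then (\<Sum>a<d. cnj (V $$ (a, ii y)) * V $$ (a, ii y')) else 0)" by simp
    also have "\<dots> = (if y = y' then 1 else 0)"
      using unitary_cols[OF V ii_lt ii_lt, of y y'] src_eq[of y y'] src_inj[OF y y'] by auto
    finally show "(\<Sum>k<n. U $$ (y,k) * cnj (U $$ (y',k))) = (if y = y' then 1 else 0)" .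
  qed
  define M where "M = tensor_mat \<rho> (ket0bra0 c)"
  have Mc: "M \<in> carrier_mat n n" unfolding M_def tensor_mat_def n_def ket0bra0_def using rc by auto
  have Midx: "M $$ (a*c+b, x') = (if b = 0 then (if x' mod c = 0 then \<rho> $$ (a, x' div c) else 0) else 0)"
    if "a < d" "b < c" "x' < n" for a b x'
  proof -
    have ab: "a*c+b < d*c" using idx_bound[OF that(1,2)] .
    have x'd: "x' div c < d" using that(3) unfolding n_def by (simp add: less_mult_imp_div_less)
    show ?thesis unfolding M_def tensor_mat_def ket0bra0_def using rc that ab x'd c n_def
      mod_div_split[OF that(2), of a] by auto
  qed
  define Out where "Out = U * M * mat_adjoint U"
  define G where "G y x' = (\<Sum>x<n. U $$ (y,x) * M $$ (x,x'))" for y x'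
  have G: "G y x' = (if ci y = 0 \<and> x' mod c = 0 then (\<Sum>a<d. cnj (V $$ (a, ii y)) * \<rho> $$ (a, x' div c)) else 0)"
    if y: "y < n" and x': "x' < n" for y x'
  proof -
    have "G y x' = (\<Sum>a<d. \<Sum>b<c. U $$ (y,a*c+b) * M $$ (a*c+b,x'))"
      unfolding G_def n_def by (rule sum_split)
    also have "\<dots> = (\<Sum>a<d. \<Sum>b<c. (if b = ci y then cnj (V $$ (a, ii y)) else 0) *
        (if b = 0 then (if x' mod c = 0 then \<rho> $$ (a, x' div c) else 0) else 0))"
      using y x' by (intro sum.cong refl, auto simp: Uidx Midx)
    also have "\<dots> = (\<Sum>a<d. if ci y = 0 then cnj (V $$ (a, ii y)) * (if x' mod c = 0 then \<rho> $$ (a, x' div c) else 0) else 0)"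
      by (intro sum.cong refl sum_two_delta ci_lt)
    also have "\<dots> = (if ci y = 0 \<and> x' mod c = 0 then (\<Sum>a<d. cnj (V $$ (a, ii y)) * \<rho> $$ (a, x' div c)) else 0)"
      by auto
    finally show ?thesis .
  qed
  have Out_idx: "Out $$ (y,y') = (if y = y' \<and> src y < d then complex_of_real (ls ! src y) else 0)"
    if y: "y < n" and y': "y' < n" for y y'
  proof -
    have Ua: "mat_adjoint U \<in> carrier_mat n n" using Uc by simp
    have "Out $$ (y,y') = (\<Sum>x'<n. (U * M) $$ (y,x') * mat_adjoint U $$ (x',y'))"
      unfolding Out_def by (rule mult_index_sum[OF mult_carrier_mat[OF Uc Mc] Ua y y'])
    also have "\<dots> = (\<Sum>x'<n. G y x' * cnj (U $$ (y',x')))"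
    proof (rule sum.cong[OF refl])
      fix x' assume x': "x' \<in> {..<n}"
      have "(U * M) $$ (y,x') = G y x'" unfolding G_def using x' by (intro mult_index_sum[OF Uc Mc y], simp)
      moreover have "mat_adjoint U $$ (x',y') = cnj (U $$ (y',x'))" using Uc x' y' by simp
      ultimately show "(U * M) $$ (y,x') * mat_adjoint U $$ (x',y') = G y x' * cnj (U $$ (y',x'))" by simp
    qed
    also have "\<dots> = (\<Sum>a<d. \<Sum>b<c. G y (a*c+b) * cnj (U $$ (y',a*c+b)))"
      unfolding n_def by (rule sum_split)
    also have "\<dots> = (\<Sum>a<d. \<Sum>b<c. (if b = 0 then (if ci y = 0 then (\<Sum>a'<d. cnj (V $$ (a', ii y)) * \<rho> $$ (a', a)) else 0) else 0)
         * (if b = ci y' then V $$ (a, ii y') else 0))"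
    proof (intro sum.cong refl)
      fix a b assume a: "a \<in> {..<d}" and b: "b \<in> {..<c}"
      have abn: "a*c+b < n" unfolding n_def using a b idx_bound by simp
      show "G y (a*c+b) * cnj (U $$ (y',a*c+b)) = (if b = 0 then (if ci y = 0 then (\<Sum>a'<d. cnj (V $$ (a', ii y)) * \<rho> $$ (a', a)) else 0) else 0)
         * (if b = ci y' then V $$ (a, ii y') else 0)"
        unfolding G[OF y abn] using a b y' mod_div_split[of b c a] by (auto simp: Uidx)
    qed
    also have "\<dots> = (\<Sum>a<d. if 0 = ci y' then (if ci y = 0 then (\<Sum>a'<d. cnj (V $$ (a', ii y)) * \<rho> $$ (a', a)) else 0) * V $$ (a, ii y') else 0)"
      using c by (intro sum.cong refl sum_two_delta, auto)
    also have "\<dots> = (if ci y = 0 \<and> ci y' = 0 then (\<Sum>a<d. (\<Sum>a'<d. cnj (V $$ (a', ii y)) * \<rho> $$ (a', a)) * V $$ (a, ii y')) else 0)"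
      by auto
    also have "\<dots> = (if ci y = 0 \<and> ci y' = 0 then (if ii y = ii y' then complex_of_real (ls ! ii y) else 0) else 0)"
      using spectral_entry[OF sd ii_lt ii_lt] by simp
    also have "\<dots> = (if y = y' \<and> src y < d then complex_of_real (ls ! src y) else 0)"
      using ci0[of y] ci0[of y'] ii_src[of y] ii_src[of y'] src_inj[OF y y'] by auto
    finally show ?thesis .
  qed
  define lam where "lam y = (if src y < d then ls ! src y else 0)" for y
  have lam_nn: "lam y \<ge> 0" for y unfolding lam_def using nn by auto
  define q where "q a = (\<Sum>b<c. lam (a*c+b))" for a
  have q_nn: "q a \<ge> 0" for a unfolding q_def using lam_nn by (intro sum_nonneg, auto)
  have PX: "ptrace2 d c Out - ket0bra0 d = dmat d (\<lambda>a. complex_of_real (q a) - (if a = 0 then 1 else 0))"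
  proof (rule eq_matI)
    fix a a' assume "a < dim_row (dmat d (\<lambda>a. complex_of_real (q a) - (if a = 0 then 1 else 0)))"
      "a' < dim_col (dmat d (\<lambda>a. complex_of_real (q a) - (if a = 0 then 1 else 0)))"
    hence a: "a < d" and a': "a' < d" by auto
    have "ptrace2 d c Out $$ (a,a') = (\<Sum>b<c. Out $$ (a*c+b, a'*c+b))" unfolding ptrace2_def using a a' by simp
    also have "\<dots> = (\<Sum>b<c. if a = a' then complex_of_real (lam (a*c+b)) else 0)"
    proof (intro sum.cong refl)
      fix b assume b: "b \<in> {..<c}"
      have abn: "a*c+b < n" "a'*c+b < n" unfolding n_def using a a' b idx_bound by simp_all
      have "a*c+b = a'*c+b \<longleftrightarrow> a = a'" using c by simp
      thus "Out $$ (a*c+b, a'*c+b) = (if a = a' then complex_of_real (lam (a*c+b)) else 0)"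
        unfolding Out_idx[OF abn] lam_def by auto
    qed
    also have "\<dots> = (if a = a' then complex_of_real (q a) else 0)" unfolding q_def by (simp add: of_real_sum)
    finally show "(ptrace2 d c Out - ket0bra0 d) $$ (a,a') = dmat d (\<lambda>a. complex_of_real (q a) - (if a = 0 then 1 else 0)) $$ (a,a')"
      using a a' unfolding ket0bra0_def by (simp add: ptrace2_def)
  qed (auto simp: ptrace2_def ket0bra0_def)
  have sum_q: "(\<Sum>a<d. q a) = 1"
  proof -
    have "(\<Sum>a<d. q a) = (\<Sum>y<n. lam y)" unfolding q_def n_def by (rule sum_split[symmetric])
    also have "\<dots> = (\<Sum>j<n. if j < d then ls ! j else 0)"
    proof -
      have inj: "inj_on src {..<n}" using src_inj by (auto intro: inj_onI)
      have im: "src ` {..<n} = {..<n}" by (rule endo_inj_surj, insert inj src_lt, auto)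
      have "(\<Sum>j<n. if j < d then ls ! j else 0) = (\<Sum>j\<in>src ` {..<n}. if j < d then ls ! j else 0)" unfolding im ..
      also have "\<dots> = (\<Sum>y<n. lam y)" unfolding lam_def by (subst sum.reindex[OF inj], simp)
      finally show ?thesis by simp
    qed
    also have "\<dots> = (\<Sum>j<d + (n - d). if j < d then ls ! j else 0)" using dn by simp
    also have "\<dots> = (\<Sum>j<d. ls ! j)" unfolding sum_add_split by simp
    finally show ?thesis using tr by simp
  qed
  have q0: "q 0 \<ge> 1 - \<epsilon>"
  proof -
    have "q 0 = (\<Sum>b<(d - m) + (c - (d - m)). lam b)" unfolding q_def using dmc by simp
    also have "\<dots> = (\<Sum>b<d - m. lam b) + (\<Sum>b<c - (d - m). lam (d - m + b))" by (rule sum_add_split)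
    also have "\<dots> \<ge> (\<Sum>b<d - m. lam b)" using lam_nn by (simp add: sum_nonneg)
    also have "(\<Sum>b<d - m. lam b) = (\<Sum>b<d - m. ls ! (m + b))"
    proof (intro sum.cong refl)
      fix b assume "b \<in> {..<d - m}"
      hence "b + m < d" by simp
      hence "src b = m + b" unfolding src_def using dn by simp
      thus "lam b = ls ! (m + b)" unfolding lam_def using \<open>b + m < d\<close> by simp
    qed
    also have "\<dots> = (\<Sum>j<m + (d - m). ls ! j) - (\<Sum>j<m. ls ! j)" unfolding sum_add_split by simp
    also have "\<dots> = 1 - sum_list (take m ls)" using md tr sum_list_take_sum[of m ls] l by simp
    finally show ?thesis using tk by simp
  qed
  have tn: "trace_norm d (ptrace2 d c Out - ket0bra0 d) \<le> 2 * \<epsilon>"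
  proof -
    obtain d' where d': "d = Suc d'" using d by (cases d, auto)
    have s1: "q 0 + (\<Sum>a<d'. q (Suc a)) = 1" using sum_q unfolding d' sum.lessThan_Suc_shift .
    have "trace_norm d (ptrace2 d c Out - ket0bra0 d) = (\<Sum>a<d. cmod (complex_of_real (q a) - (if a = 0 then 1 else 0)))"
      unfolding PX by (rule trace_norm_dmat)
    also have "\<dots> = cmod (complex_of_real (q 0) - 1) + (\<Sum>a<d'. q (Suc a))"
      unfolding d' sum.lessThan_Suc_shift using q_nn by simp
    also have "cmod (complex_of_real (q 0) - 1) = 1 - q 0"
    proof -
      have "q 0 \<le> 1" using s1 q_nn by (smt (verit) sum_nonneg)
      have "complex_of_real (q 0) - 1 = complex_of_real (q 0 - 1)" by simp
      hence "cmod (complex_of_real (q 0) - 1) = \<bar>q 0 - 1\<bar>" by (simp only: norm_of_real)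
      thus ?thesis using \<open>q 0 \<le> 1\<close> by simp
    qed
    finally show ?thesis using s1 q0 by simp
  qed
  have "2 * \<epsilon> \<le> 3 * sqrt \<epsilon>"
  proof -
    have "\<epsilon> = sqrt \<epsilon> * sqrt \<epsilon>" using e0 by simp
    also have "\<dots> \<le> sqrt \<epsilon> * 1" using e0 e1 by (intro mult_left_mono, auto)
    finally show ?thesis using e0 by simp
  qed
  hence "trace_norm d (ptrace2 d c (U * tensor_mat \<rho> (ket0bra0 c) * mat_adjoint U) - ket0bra0 d) \<le> 3 * sqrt \<epsilon>"
    using tn unfolding Out_def M_def by simp
  hence "pc_code d \<rho> (3 * sqrt \<epsilon>) c d c U" unfolding pc_code_def using c d U unfolding n_def by simp
  thus ?thesis by blast
qed

theorem theorem1: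
  fixes dA :: nat and \<rho> :: "complex mat" and \<epsilon> :: real
  assumes "0 < dA"
    and "density_mat dA \<rho>"
    and "0 \<le> \<epsilon>" and "\<epsilon> \<le> 1"
  shows "purity dA (3 * sqrt \<epsilon>) \<rho> \<ge> log 2 dA - Hmax_supp dA \<epsilon> \<rho>"
proof -
  note d = assms(1) and dm = assms(2) and e0 = assms(3) and e1 = assms(4)
  have herm: "hermitian_mat dA \<rho>" using dm unfolding density_mat_def psd_mat_def by auto
  obtain U0 ls0 where sd0: "spectral_decomp dA \<rho> U0 ls0" using spectral_sorted[OF herm] by blast
  let ?P = "\<lambda>\<rho>'. \<exists>U ls. spectral_decomp dA \<rho> U ls \<and>
      \<rho>' = U * diag_real (map (\<lambda>i. if i < num_zeroed \<epsilon> ls then 0 else ls ! i) [0..<dA]) * mat_adjoint U"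
  have "\<exists>\<rho>'. ?P \<rho>'" using sd0 by blast
  hence "?P (smoothed_op dA \<epsilon> \<rho>)" unfolding smoothed_op_def by (rule someI_ex)
  then obtain V ls where sd: "spectral_decomp dA \<rho> V ls" and
    so: "smoothed_op dA \<epsilon> \<rho> = V * diag_real (map (\<lambda>i. if i < num_zeroed \<epsilon> ls then 0 else ls ! i) [0..<dA]) * mat_adjoint V"
    by blast
  have l: "length ls = dA" and srt: "sorted ls" using sd unfolding spectral_decomp_def by auto
  define m where "m = num_zeroed \<epsilon> ls"
  have md: "m \<le> dA" unfolding m_def using nz_props(1)[OF e0, of ls] l by simp
  have tk: "sum_list (take m ls) \<le> \<epsilon>" unfolding m_def using nz_props(2)[OF e0] .
  have nn: "\<And>i. i < length ls \<Longrightarrow> ls ! i \<ge> 0" using spectral_nonneg[OF dm sd] l by simp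
  have pos: "ls ! i \<noteq> 0" if "m \<le> i" "i < dA" for i
    using pos_after[OF e0 srt nn, of i] that l unfolding m_def by simp
  have rk: "dA - m \<le> vec_space.rank dA (smoothed_op dA \<epsilon> \<rho>)"
    unfolding so m_def using rank_lower[OF sd md[unfolded m_def]] pos[unfolded m_def] by simp
  define c where "c = max (dA - m) 1"
  have c: "0 < c" "dA - m \<le> c" unfolding c_def by auto
  obtain U where pc: "pc_code dA \<rho> (3 * sqrt \<epsilon>) c dA c U"
    using code_exists[OF d c(1) dm sd md c(2) tk e0 e1] by blast
  let ?S = "{r. achievable dA \<rho> (3 * sqrt \<epsilon>) r}"
  have mem: "log 2 dA - log 2 c \<in> ?S" unfolding achievable_def using pc by blast
  have bdd: "bdd_above ?S"
  proof (rule bdd_aboveI[of _ "log 2 dA"])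
    fix r assume "r \<in> ?S"
    then obtain dC dP dG V where p: "pc_code dA \<rho> (3 * sqrt \<epsilon>) dC dP dG V" and r: "r = log 2 dP - log 2 dC"
      unfolding achievable_def by blast
    have pos: "0 < dC" "0 < dP" "0 < dG" and eq: "dP * dG = dA * dC" using p unfolding pc_code_def by auto
    have "dP \<le> dP * dG" using pos by simp
    hence "dP \<le> dA * dC" using eq by simp
    hence "real dP \<le> real dA * real dC" by (simp only: of_nat_mult[symmetric] of_nat_le_iff)
    hence "log 2 dP \<le> log 2 (real dA * real dC)" using pos by (intro log_mono, auto)
    also have "\<dots> = log 2 dA + log 2 dC" using pos d by (intro log_mult_pos, auto)
    finally show "r \<le> log 2 dA" using r by simp
  qed
  have "log 2 dA - log 2 c \<le> purity dA (3 * sqrt \<epsilon>) \<rho>" unfolding purity_def by (rule cSup_upper[OF mem bdd])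
  moreover have "log 2 c \<le> Hmax_supp dA \<epsilon> \<rho>"
  proof (cases "1 \<le> dA - m")
    case True
    hence "c = dA - m" unfolding c_def by simp
    hence "real c \<le> real (vec_space.rank dA (smoothed_op dA \<epsilon> \<rho>))" using rk by simp
    thus ?thesis unfolding Hmax_supp_def using c(1) by (intro log_mono, auto)
  next
    case False
    hence "c = 1" unfolding c_def by simp
    moreover have "0 \<le> log 2 (real (vec_space.rank dA (smoothed_op dA \<epsilon> \<rho>)))"
      by (cases "vec_space.rank dA (smoothed_op dA \<epsilon> \<rho>) = 0", auto simp: log_def)
    ultimately show ?thesis unfolding Hmax_supp_def by simp
  qed
  ultimately show ?thesis by simp
qed


end
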